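(* Under the hypotheses of Lemma 2.2, the additive map $\varphi:\mathcal{U}\to\mathcal{U}$, $\varphi(U)=\phi(U)-\phi(I)U+[T,U]$ with $T=P_1\phi(P_1)P_2+P_2\phi(P_2)P_1$, is a Jordan derivation, i.e. $\varphi(U^2)=\varphi(U)U+U\varphi(U)$ for all $U\in\mathcal{U}$.
   Context: $\mathcal{U}=\begin{pmatrix}\mathcal{A}&\mathcal{M}\\ \mathcal{N}&\mathcal{B}\end{pmatrix}$ is a generalized matrix ring: $\mathcal{A},\mathcal{B}$ unital 2-torsion free rings, $\mathcal{M}$ a unital $(\mathcal{A},\mathcal{B})$-bimodule faithful on both sides, $\mathcal{N}$ a unital $(\mathcal{B},\mathcal{A})$-bimodule, with bimodule pairings $MN\in\mathcal{A}$, $NM\in\mathcal{B}$ satisfying $(MN)M'=M(NM')$, $(NM)N'=N(MN')$; $\mathcal{U}$ consists of $2\times2$ matrices with usual matrix operations and identity $I$. The hypotheses of Lemma 2.2: $\phi:\mathcal{U}\to\mathcal{U}$ is additive and $\phi(U)\circ V+U\circ\phi(V)=0$ whenever $UV=VU=0$. $X\circ Y=XY+YX$, $[X,Y]=XY-YX$. $P_1=\mathrm{diag}(I_{\mathcal{A}},0)$, $P_2=\mathrm{diag}(0,I_{\mathcal{B}})$. *)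

theory Defs
  imports Main "HOL-Library.Product_Plus"
begin

text \<open>A generalized matrix ring U = [[A, M],[N, B]] is represented by its data:
  the rings A, B are the types 'a, 'b; the bimodules M, N are the abelian groups 'm, 'n;
  the module actions and the two pairings M x N -> A, N x M -> B are record fields.
  Elements of U are quadruples (a, m, n, b) standing for the matrix [[a, m],[n, b]];
  addition is componentwise (Product_Plus).\<close>

record ('a, 'm, 'n, 'b) gmr =
  lA  :: "'a \<Rightarrow> 'm \<Rightarrow> 'm"
  rB  :: "'m \<Rightarrow> 'b \<Rightarrow> 'm"
  lB  :: "'b \<Rightarrow> 'n \<Rightarrow> 'n"
  rA  :: "'n \<Rightarrow> 'a \<Rightarrow> 'n"
  pMN :: "'m \<Rightarrow> 'n \<Rightarrow> 'a"
  pNM :: "'n \<Rightarrow> 'm \<Rightarrow> 'b"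

type_synonym ('a, 'm, 'n, 'b) gmat = "'a \<times> 'm \<times> 'n \<times> 'b"

definition two_torsion_free :: "'a::ab_group_add itself \<Rightarrow> bool" where
  "two_torsion_free _ \<longleftrightarrow> (\<forall>x::'a. x + x = 0 \<longrightarrow> x = 0)"

definition gen_matrix_ring ::
  "('a::ring_1, 'm::ab_group_add, 'n::ab_group_add, 'b::ring_1) gmr \<Rightarrow> bool" where
  "gen_matrix_ring S \<longleftrightarrow>
    \<comment> \<open>M is a unital (A,B)-bimodule\<close>
    (\<forall>a a' m. lA S (a + a') m = lA S a m + lA S a' m) \<and>
    (\<forall>a m m'. lA S a (m + m') = lA S a m + lA S a m') \<and>
    (\<forall>a a' m. lA S (a * a') m = lA S a (lA S a' m)) \<and>
    (\<forall>m. lA S 1 m = m) \<and>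
    (\<forall>m b b'. rB S m (b + b') = rB S m b + rB S m b') \<and>
    (\<forall>m m' b. rB S (m + m') b = rB S m b + rB S m' b) \<and>
    (\<forall>m b b'. rB S m (b * b') = rB S (rB S m b) b') \<and>
    (\<forall>m. rB S m 1 = m) \<and>
    (\<forall>a m b. rB S (lA S a m) b = lA S a (rB S m b)) \<and>
    \<comment> \<open>N is a unital (B,A)-bimodule\<close>
    (\<forall>b b' n. lB S (b + b') n = lB S b n + lB S b' n) \<and>
    (\<forall>b n n'. lB S b (n + n') = lB S b n + lB S b n') \<and>
    (\<forall>b b' n. lB S (b * b') n = lB S b (lB S b' n)) \<and>
    (\<forall>n. lB S 1 n = n) \<and>
    (\<forall>n a a'. rA S n (a + a') = rA S n a + rA S n a') \<and>
    (\<forall>n n' a. rA S (n + n') a = rA S n a + rA S n' a) \<and>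
    (\<forall>n a a'. rA S n (a * a') = rA S (rA S n a) a') \<and>
    (\<forall>n. rA S n 1 = n) \<and>
    (\<forall>b n a. rA S (lB S b n) a = lB S b (rA S n a)) \<and>
    \<comment> \<open>M is faithful on both sides\<close>
    (\<forall>a. (\<forall>m. lA S a m = 0) \<longrightarrow> a = 0) \<and>
    (\<forall>b. (\<forall>m. rB S m b = 0) \<longrightarrow> b = 0) \<and>
    \<comment> \<open>pairing M x N -> A: A-bimodule homomorphism, B-balanced\<close>
    (\<forall>m m' n. pMN S (m + m') n = pMN S m n + pMN S m' n) \<and>
    (\<forall>m n n'. pMN S m (n + n') = pMN S m n + pMN S m n') \<and>
    (\<forall>a m n. pMN S (lA S a m) n = a * pMN S m n) \<and>
    (\<forall>m n a. pMN S m (rA S n a) = pMN S m n * a) \<and>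
    (\<forall>m b n. pMN S (rB S m b) n = pMN S m (lB S b n)) \<and>
    \<comment> \<open>pairing N x M -> B: B-bimodule homomorphism, A-balanced\<close>
    (\<forall>n n' m. pNM S (n + n') m = pNM S n m + pNM S n' m) \<and>
    (\<forall>n m m'. pNM S n (m + m') = pNM S n m + pNM S n m') \<and>
    (\<forall>b n m. pNM S (lB S b n) m = b * pNM S n m) \<and>
    (\<forall>n m b. pNM S n (rB S m b) = pNM S n m * b) \<and>
    (\<forall>n a m. pNM S (rA S n a) m = pNM S n (lA S a m)) \<and>
    \<comment> \<open>associativity conditions\<close>
    (\<forall>m n m'. lA S (pMN S m n) m' = rB S m (pNM S n m')) \<and>
    (\<forall>n m n'. lB S (pNM S n m) n' = rA S n (pMN S m n'))"

definition gm_mult ::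
  "('a::ring_1, 'm::ab_group_add, 'n::ab_group_add, 'b::ring_1) gmr \<Rightarrow>
   ('a, 'm, 'n, 'b) gmat \<Rightarrow> ('a, 'm, 'n, 'b) gmat \<Rightarrow> ('a, 'm, 'n, 'b) gmat" where
  "gm_mult S X Y = (case X of (a, m, n, b) \<Rightarrow> case Y of (a', m', n', b') \<Rightarrow>
     (a * a' + pMN S m n',
      lA S a m' + rB S m b',
      lB S b n' + rA S n a',
      pNM S n m' + b * b'))"

definition gm_one :: "('a::ring_1, 'm::ab_group_add, 'n::ab_group_add, 'b::ring_1) gmat" where
  "gm_one = (1, 0, 0, 1)"

definition gm_P1 :: "('a::ring_1, 'm::ab_group_add, 'n::ab_group_add, 'b::ring_1) gmat" where
  "gm_P1 = (1, 0, 0, 0)"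

definition gm_P2 :: "('a::ring_1, 'm::ab_group_add, 'n::ab_group_add, 'b::ring_1) gmat" where
  "gm_P2 = (0, 0, 0, 1)"

definition gm_jordan where "gm_jordan S X Y = gm_mult S X Y + gm_mult S Y X"
definition gm_comm where "gm_comm S X Y = gm_mult S X Y - gm_mult S Y X"

definition gm_T where
  "gm_T S \<phi> = gm_mult S (gm_mult S gm_P1 (\<phi> gm_P1)) gm_P2
             + gm_mult S (gm_mult S gm_P2 (\<phi> gm_P2)) gm_P1"

definition gm_varphi where
  "gm_varphi S \<phi> U = \<phi> U - gm_mult S (\<phi> gm_one) U + gm_comm S (gm_T S \<phi>) U"

end

theory Submission imports Defs begin


locale GM =
  fixes S :: "('a::ring_1, 'm::ab_group_add, 'n::ab_group_add, 'b::ring_1) gmr"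
  assumes gmr: "gen_matrix_ring S"
begin

lemma lA_add1[simp]: "lA S (a + a') m = lA S a m + lA S a' m" using gmr unfolding gen_matrix_ring_def by (elim conjE) (erule allE)+
lemma lA_add2[simp]: "lA S a (m + m') = lA S a m + lA S a m'" using gmr unfolding gen_matrix_ring_def by (elim conjE) (erule allE)+
lemma lA_mult[simp]: "lA S (a * a') m = lA S a (lA S a' m)" using gmr unfolding gen_matrix_ring_def by (elim conjE) (erule allE)+
lemma lA_one[simp]: "lA S 1 m = m" using gmr unfolding gen_matrix_ring_def by (elim conjE) (erule allE)+
lemma rB_add2[simp]: "rB S m (b + b') = rB S m b + rB S m b'" using gmr unfolding gen_matrix_ring_def by (elim conjE) (erule allE)+
lemma rB_add1[simp]: "rB S (m + m') b = rB S m b + rB S m' b" using gmr unfolding gen_matrix_ring_def by (elim conjE) (erule allE)+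
lemma rB_mult[simp]: "rB S m (b * b') = rB S (rB S m b) b'" using gmr unfolding gen_matrix_ring_def by (elim conjE) (erule allE)+
lemma rB_one[simp]: "rB S m 1 = m" using gmr unfolding gen_matrix_ring_def by (elim conjE) (erule allE)+
lemma rB_lA[simp]: "rB S (lA S a m) b = lA S a (rB S m b)" using gmr unfolding gen_matrix_ring_def by (elim conjE) (erule allE)+
lemma lB_add1[simp]: "lB S (b + b') n = lB S b n + lB S b' n" using gmr unfolding gen_matrix_ring_def by (elim conjE) (erule allE)+
lemma lB_add2[simp]: "lB S b (n + n') = lB S b n + lB S b n'" using gmr unfolding gen_matrix_ring_def by (elim conjE) (erule allE)+
lemma lB_mult[simp]: "lB S (b * b') n = lB S b (lB S b' n)" using gmr unfolding gen_matrix_ring_def by (elim conjE) (erule allE)+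
lemma lB_one[simp]: "lB S 1 n = n" using gmr unfolding gen_matrix_ring_def by (elim conjE) (erule allE)+
lemma rA_add2[simp]: "rA S n (a + a') = rA S n a + rA S n a'" using gmr unfolding gen_matrix_ring_def by (elim conjE) (erule allE)+
lemma rA_add1[simp]: "rA S (n + n') a = rA S n a + rA S n' a" using gmr unfolding gen_matrix_ring_def by (elim conjE) (erule allE)+
lemma rA_mult[simp]: "rA S n (a * a') = rA S (rA S n a) a'" using gmr unfolding gen_matrix_ring_def by (elim conjE) (erule allE)+
lemma rA_one[simp]: "rA S n 1 = n" using gmr unfolding gen_matrix_ring_def by (elim conjE) (erule allE)+
lemma rA_lB[simp]: "rA S (lB S b n) a = lB S b (rA S n a)" using gmr unfolding gen_matrix_ring_def by (elim conjE) (erule allE)+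
lemma faithA: "(\<And>m. lA S a m = 0) \<Longrightarrow> a = 0" using gmr unfolding gen_matrix_ring_def by auto
lemma faithB: "(\<And>m. rB S m b = 0) \<Longrightarrow> b = 0" using gmr unfolding gen_matrix_ring_def by auto
lemma pMN_add1[simp]: "pMN S (m + m') n = pMN S m n + pMN S m' n" using gmr unfolding gen_matrix_ring_def by (elim conjE) (erule allE)+
lemma pMN_add2[simp]: "pMN S m (n + n') = pMN S m n + pMN S m n'" using gmr unfolding gen_matrix_ring_def by (elim conjE) (erule allE)+
lemma pMN_lA[simp]: "pMN S (lA S a m) n = a * pMN S m n" using gmr unfolding gen_matrix_ring_def by (elim conjE) (erule allE)+
lemma pMN_rA[simp]: "pMN S m (rA S n a) = pMN S m n * a" using gmr unfolding gen_matrix_ring_def by (elim conjE) (erule allE)+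
lemma pMN_rB[simp]: "pMN S (rB S m b) n = pMN S m (lB S b n)" using gmr unfolding gen_matrix_ring_def by (elim conjE) (erule allE)+
lemma pNM_add1[simp]: "pNM S (n + n') m = pNM S n m + pNM S n' m" using gmr unfolding gen_matrix_ring_def by (elim conjE) (erule allE)+
lemma pNM_add2[simp]: "pNM S n (m + m') = pNM S n m + pNM S n m'" using gmr unfolding gen_matrix_ring_def by (elim conjE) (erule allE)+
lemma pNM_lB[simp]: "pNM S (lB S b n) m = b * pNM S n m" using gmr unfolding gen_matrix_ring_def by (elim conjE) (erule allE)+
lemma pNM_rB[simp]: "pNM S n (rB S m b) = pNM S n m * b" using gmr unfolding gen_matrix_ring_def by (elim conjE) (erule allE)+
lemma pNM_rA[simp]: "pNM S (rA S n a) m = pNM S n (lA S a m)" using gmr unfolding gen_matrix_ring_def by (elim conjE) (erule allE)+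
lemma lA_pMN[simp]: "lA S (pMN S m n) m' = rB S m (pNM S n m')" using gmr unfolding gen_matrix_ring_def by (elim conjE) (erule allE)+
lemma lB_pNM[simp]: "lB S (pNM S n m) n' = rA S n (pMN S m n')" using gmr unfolding gen_matrix_ring_def by (elim conjE) (erule allE)+

lemma lA_zero1[simp]: "lA S 0 m = 0" using lA_add1[of 0 0 m] by simp
lemma lA_zero2[simp]: "lA S a 0 = 0" using lA_add2[of a 0 0] by simp
lemma lA_minus1[simp]: "lA S (- a) m = - lA S a m"
proof -
  have "lA S a m + lA S (- a) m = 0" using lA_add1[of a "-a" m] by simp
  then show ?thesis by (rule minus_unique[symmetric])
qed
lemma lA_minus2[simp]: "lA S a (- m) = - lA S a m"
proof -
  have "lA S a m + lA S a (- m) = 0" using lA_add2[of a m "-m"] by simp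
  then show ?thesis by (rule minus_unique[symmetric])
qed
lemma lA_diff1[simp]: "lA S (a - a') m = lA S a m - lA S a' m" by (simp only: diff_conv_add_uminus lA_add1 lA_minus1)
lemma lA_diff2[simp]: "lA S a (m - m') = lA S a m - lA S a m'" by (simp only: diff_conv_add_uminus lA_add2 lA_minus2)
lemma rB_zero1[simp]: "rB S 0 b = 0" using rB_add1[of 0 0 b] by simp
lemma rB_zero2[simp]: "rB S m 0 = 0" using rB_add2[of m 0 0] by simp
lemma rB_minus1[simp]: "rB S (- m) b = - rB S m b"
proof -
  have "rB S m b + rB S (- m) b = 0" using rB_add1[of m "-m" b] by simp
  then show ?thesis by (rule minus_unique[symmetric])
qed
lemma rB_minus2[simp]: "rB S m (- b) = - rB S m b"
proof -
  have "rB S m b + rB S m (- b) = 0" using rB_add2[of m b "-b"] by simp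
  then show ?thesis by (rule minus_unique[symmetric])
qed
lemma rB_diff1[simp]: "rB S (m - m') b = rB S m b - rB S m' b" by (simp only: diff_conv_add_uminus rB_add1 rB_minus1)
lemma rB_diff2[simp]: "rB S m (b - b') = rB S m b - rB S m b'" by (simp only: diff_conv_add_uminus rB_add2 rB_minus2)
lemma lB_zero1[simp]: "lB S 0 n = 0" using lB_add1[of 0 0 n] by simp
lemma lB_zero2[simp]: "lB S b 0 = 0" using lB_add2[of b 0 0] by simp
lemma lB_minus1[simp]: "lB S (- b) n = - lB S b n"
proof -
  have "lB S b n + lB S (- b) n = 0" using lB_add1[of b "-b" n] by simp
  then show ?thesis by (rule minus_unique[symmetric])
qed
lemma lB_minus2[simp]: "lB S b (- n) = - lB S b n"
proof -
  have "lB S b n + lB S b (- n) = 0" using lB_add2[of b n "-n"] by simp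
  then show ?thesis by (rule minus_unique[symmetric])
qed
lemma lB_diff1[simp]: "lB S (b - b') n = lB S b n - lB S b' n" by (simp only: diff_conv_add_uminus lB_add1 lB_minus1)
lemma lB_diff2[simp]: "lB S b (n - n') = lB S b n - lB S b n'" by (simp only: diff_conv_add_uminus lB_add2 lB_minus2)
lemma rA_zero1[simp]: "rA S 0 a = 0" using rA_add1[of 0 0 a] by simp
lemma rA_zero2[simp]: "rA S n 0 = 0" using rA_add2[of n 0 0] by simp
lemma rA_minus1[simp]: "rA S (- n) a = - rA S n a"
proof -
  have "rA S n a + rA S (- n) a = 0" using rA_add1[of n "-n" a] by simp
  then show ?thesis by (rule minus_unique[symmetric])
qed
lemma rA_minus2[simp]: "rA S n (- a) = - rA S n a"
proof -
  have "rA S n a + rA S n (- a) = 0" using rA_add2[of n a "-a"] by simp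
  then show ?thesis by (rule minus_unique[symmetric])
qed
lemma rA_diff1[simp]: "rA S (n - n') a = rA S n a - rA S n' a" by (simp only: diff_conv_add_uminus rA_add1 rA_minus1)
lemma rA_diff2[simp]: "rA S n (a - a') = rA S n a - rA S n a'" by (simp only: diff_conv_add_uminus rA_add2 rA_minus2)
lemma pMN_zero1[simp]: "pMN S 0 n = 0" using pMN_add1[of 0 0 n] by simp
lemma pMN_zero2[simp]: "pMN S m 0 = 0" using pMN_add2[of m 0 0] by simp
lemma pMN_minus1[simp]: "pMN S (- m) n = - pMN S m n"
proof -
  have "pMN S m n + pMN S (- m) n = 0" using pMN_add1[of m "-m" n] by simp
  then show ?thesis by (rule minus_unique[symmetric])
qed
lemma pMN_minus2[simp]: "pMN S m (- n) = - pMN S m n"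
proof -
  have "pMN S m n + pMN S m (- n) = 0" using pMN_add2[of m n "-n"] by simp
  then show ?thesis by (rule minus_unique[symmetric])
qed
lemma pMN_diff1[simp]: "pMN S (m - m') n = pMN S m n - pMN S m' n" by (simp only: diff_conv_add_uminus pMN_add1 pMN_minus1)
lemma pMN_diff2[simp]: "pMN S m (n - n') = pMN S m n - pMN S m n'" by (simp only: diff_conv_add_uminus pMN_add2 pMN_minus2)
lemma pNM_zero1[simp]: "pNM S 0 m = 0" using pNM_add1[of 0 0 m] by simp
lemma pNM_zero2[simp]: "pNM S n 0 = 0" using pNM_add2[of n 0 0] by simp
lemma pNM_minus1[simp]: "pNM S (- n) m = - pNM S n m"
proof -
  have "pNM S n m + pNM S (- n) m = 0" using pNM_add1[of n "-n" m] by simp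
  then show ?thesis by (rule minus_unique[symmetric])
qed
lemma pNM_minus2[simp]: "pNM S n (- m) = - pNM S n m"
proof -
  have "pNM S n m + pNM S n (- m) = 0" using pNM_add2[of n m "-m"] by simp
  then show ?thesis by (rule minus_unique[symmetric])
qed
lemma pNM_diff1[simp]: "pNM S (n - n') m = pNM S n m - pNM S n' m" by (simp only: diff_conv_add_uminus pNM_add1 pNM_minus1)
lemma pNM_diff2[simp]: "pNM S n (m - m') = pNM S n m - pNM S n m'" by (simp only: diff_conv_add_uminus pNM_add2 pNM_minus2)

lemma mult_tup[simp]: "gm_mult S (a, m, n, b) (a', m', n', b') =
   (a * a' + pMN S m n', lA S a m' + rB S m b', lB S b n' + rA S n a', pNM S n m' + b * b')"
  by (simp add: gm_mult_def)

lemma mult_assoc: "gm_mult S (gm_mult S X Y) Z = gm_mult S X (gm_mult S Y Z)"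
  by (cases X; cases Y; cases Z) (simp add: algebra_simps)

lemma mult_addL: "gm_mult S (X + Y) Z = gm_mult S X Z + gm_mult S Y Z"
  by (cases X; cases Y; cases Z) (simp add: algebra_simps)
lemma mult_addR: "gm_mult S Z (X + Y) = gm_mult S Z X + gm_mult S Z Y"
  by (cases X; cases Y; cases Z) (simp add: algebra_simps)
lemma mult_diffL: "gm_mult S (X - Y) Z = gm_mult S X Z - gm_mult S Y Z"
  by (cases X; cases Y; cases Z) (simp add: algebra_simps)
lemma mult_diffR: "gm_mult S Z (X - Y) = gm_mult S Z X - gm_mult S Z Y"
  by (cases X; cases Y; cases Z) (simp add: algebra_simps)
lemma mult_zeroL[simp]: "gm_mult S 0 Z = 0"
  by (cases Z) (simp add: zero_prod_def)
lemma mult_zeroR[simp]: "gm_mult S Z 0 = 0"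
  by (cases Z) (simp add: zero_prod_def)

end



locale JD = GM S for S :: "('a::ring_1, 'm::ab_group_add, 'n::ab_group_add, 'b::ring_1) gmr" +
  fixes d :: "('a, 'm, 'n, 'b) gmat \<Rightarrow> ('a, 'm, 'n, 'b) gmat" and c1 :: 'a and c2 :: 'b
  assumes tA: "\<And>x::'a. x + x = 0 \<Longrightarrow> x = 0"
    and tB: "\<And>x::'b. x + x = 0 \<Longrightarrow> x = 0"
    and dadd: "\<And>U V. d (U + V) = d U + d V"
    and dP1: "d (1,0,0,0) = 0" and dP2: "d (0,0,0,1) = 0"
    and cond: "\<And>U V. gm_mult S U V = 0 \<Longrightarrow> gm_mult S V U = 0 \<Longrightarrow>
      gm_jordan S (d U) V + gm_jordan S U (d V)
      + gm_jordan S (gm_mult S (c1,0,0,c2) U) V + gm_jordan S U (gm_mult S (c1,0,0,c2) V) = 0"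
begin

lemma d0[simp]: "d 0 = 0" using dadd[of 0 0] by simp
lemma dminus: "d (- X) = - d X"
proof -
  have "d X + d (- X) = 0" using dadd[of X "-X"] by simp
  then show ?thesis by (rule minus_unique[symmetric])
qed
lemma ddiff: "d (X - Y) = d X - d Y"
  by (simp only: diff_conv_add_uminus dadd dminus)
lemma d00[simp]: "d (0,0,0,0) = 0" using d0 by (simp add: zero_prod_def)
lemma d_split: "d (a,m,n,b) = d (a,0,0,0) + d (0,m,0,0) + d (0,0,n,0) + d (0,0,0,b)"
proof -
  have "(a,m,n,b) = (a,0,0,0) + (0,m,0,0) + (0,0,n,0) + ((0,0,0,b)::('a,'m,'n,'b) gmat)" by simp
  then show ?thesis by (simp only: dadd)
qed

lemma tA2: "(x::'a) + x = 0 \<longleftrightarrow> x = 0" using tA[of x] by auto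
lemma tB2: "(x::'b) + x = 0 \<longleftrightarrow> x = 0" using tB[of x] by auto

definition alpha where "alpha a = fst (d (a,0,0,0))"
definition beta where "beta b = snd (snd (snd (d (0,0,0,b))))"
definition qM where "qM m = fst (snd (d (0,m,0,0)))"
definition rM where "rM m = fst (snd (snd (d (0,m,0,0))))"
definition sN where "sN n = fst (snd (d (0,0,n,0)))"
definition tN where "tN n = fst (snd (snd (d (0,0,n,0))))"

lemma zeros[simp]: "alpha 0 = 0" "beta 0 = 0" "qM 0 = 0" "rM 0 = 0" "sN 0 = 0" "tN 0 = 0"
  by (simp_all add: alpha_def beta_def qM_def rM_def sN_def tN_def)

lemma R1: "d (a,0,0,0) = (alpha a, 0, 0, 0)"
proof -
  obtain y1 y2 y3 y4 where Y: "d (a,0,0,0) = (y1,y2,y3,y4)" by (cases "d (a,0,0,0)") auto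
  have "gm_jordan S (d (a,0,0,0)) (0,0,0,1) + gm_jordan S (a,0,0,0) (d (0,0,0,1))
      + gm_jordan S (gm_mult S (c1,0,0,c2) (a,0,0,0)) (0,0,0,1) + gm_jordan S (a,0,0,0) (gm_mult S (c1,0,0,c2) (0,0,0,1)) = 0"
    by (rule cond) (simp_all add: zero_prod_def)
  then show ?thesis using Y by (simp add: dP2 gm_jordan_def zero_prod_def alpha_def tB2)
qed

lemma R2: "d (0,0,0,b) = (0, 0, 0, beta b)"
proof -
  obtain y1 y2 y3 y4 where Y: "d (0,0,0,b) = (y1,y2,y3,y4)" by (cases "d (0,0,0,b)") auto
  have "gm_jordan S (d (1,0,0,0)) (0,0,0,b) + gm_jordan S (1,0,0,0) (d (0,0,0,b))
      + gm_jordan S (gm_mult S (c1,0,0,c2) (1,0,0,0)) (0,0,0,b) + gm_jordan S (1,0,0,0) (gm_mult S (c1,0,0,c2) (0,0,0,b)) = 0"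
    by (rule cond) (simp_all add: zero_prod_def)
  then show ?thesis using Y by (simp add: dP1 gm_jordan_def zero_prod_def beta_def tA2)
qed

lemma R3: "d (0,m,0,0) = (0, qM m, rM m, 0) \<and> pMN S m (rM m) = 0 \<and> pNM S (rM m) m = 0
   \<and> lA S c1 m = rB S m c2"
proof -
  obtain y1 y2 y3 y4 where Y: "d (0,m,0,0) = (y1,y2,y3,y4)" by (cases "d (0,m,0,0)") auto
  have dE: "d (1,m,0,0) = (y1,y2,y3,y4)" using d_split[of 1 m 0 0] Y dP1 by simp
  have dF: "d (0,-m,0,1) = (-y1,-y2,-y3,-y4)" using d_split[of 0 "-m" 0 1] Y dP2 dminus[of "(0,m,0,0)"]
    by simp
  have dE': "d (0,m,0,1) = (y1,y2,y3,y4)" using d_split[of 0 m 0 1] Y dP2 by simp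
  have dF': "d (1,-m,0,0) = (-y1,-y2,-y3,-y4)" using d_split[of 1 "-m" 0 0] Y dP1 dminus[of "(0,m,0,0)"]
    by simp
  have e1: "gm_jordan S (d (1,m,0,0)) (0,-m,0,1) + gm_jordan S (1,m,0,0) (d (0,-m,0,1))
      + gm_jordan S (gm_mult S (c1,0,0,c2) (1,m,0,0)) (0,-m,0,1) + gm_jordan S (1,m,0,0) (gm_mult S (c1,0,0,c2) (0,-m,0,1)) = 0"
    by (rule cond) (simp_all add: zero_prod_def)
  have e2: "gm_jordan S (d (0,m,0,1)) (1,-m,0,0) + gm_jordan S (0,m,0,1) (d (1,-m,0,0))
      + gm_jordan S (gm_mult S (c1,0,0,c2) (0,m,0,1)) (1,-m,0,0) + gm_jordan S (0,m,0,1) (gm_mult S (c1,0,0,c2) (1,-m,0,0)) = 0"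
    by (rule cond) (simp_all add: zero_prod_def)
  from e1 dE dF have f1: "- y1 - pMN S m y3 - y1 = pMN S m y3 \<and>
      - lA S y1 m - rB S m y4 + (- rB S m y4 - lA S y1 m) + (rB S m c2 - lA S c1 m) = 0 \<and>
      y4 - pNM S y3 m + y4 = pNM S y3 m" by (simp add: gm_jordan_def zero_prod_def)
  from e2 dE' dF' have f2: "y1 + (y1 - pMN S m y3) = pMN S m y3 \<and>
      - rB S m y4 - lA S y1 m + (- lA S y1 m - rB S m y4) + (lA S c1 m - rB S m c2) = 0 \<and>
      - pNM S y3 m - y4 - y4 = pNM S y3 m" by (simp add: gm_jordan_def zero_prod_def)
  have "(y1 + pMN S m y3) + (y1 + pMN S m y3) = - ((- y1 - pMN S m y3 - y1) - pMN S m y3)" by (simp add: algebra_simps)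
  then have a1: "y1 + pMN S m y3 = 0" using f1 tA2[of "y1 + pMN S m y3"] by simp
  have "(y1 - pMN S m y3) + (y1 - pMN S m y3) = (y1 + (y1 - pMN S m y3)) - pMN S m y3" by (simp add: algebra_simps)
  then have a2: "y1 - pMN S m y3 = 0" using f2 tA2[of "y1 - pMN S m y3"] by simp
  have "y1 + y1 = (y1 + pMN S m y3) + (y1 - pMN S m y3)" by (simp add: algebra_simps)
  then have y1: "y1 = 0" using a1 a2 tA2[of "y1"] by simp
  then have p: "pMN S m y3 = 0" using a1 by simp
  have "(y4 - pNM S y3 m) + (y4 - pNM S y3 m) = (y4 - pNM S y3 m + y4) - pNM S y3 m" by (simp add: algebra_simps)
  then have b1: "y4 - pNM S y3 m = 0" using f1 tB2[of "y4 - pNM S y3 m"] by simp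
  have "(y4 + pNM S y3 m) + (y4 + pNM S y3 m) = - ((- pNM S y3 m - y4 - y4) - pNM S y3 m)" by (simp add: algebra_simps)
  then have b2: "y4 + pNM S y3 m = 0" using f2 tB2[of "y4 + pNM S y3 m"] by simp
  have "y4 + y4 = (y4 - pNM S y3 m) + (y4 + pNM S y3 m)" by (simp add: algebra_simps)
  then have y4: "y4 = 0" using b1 b2 tB2[of "y4"] by simp
  then have q: "pNM S y3 m = 0" using b1 by simp
  have c: "lA S c1 m = rB S m c2" using f2 y1 y4 by simp
  show ?thesis using Y y1 y4 p q c by (simp add: qM_def rM_def)
qed


lemma R4: "d (0,0,n,0) = (0, sN n, tN n, 0) \<and> pNM S n (sN n) = 0 \<and> pMN S (sN n) n = 0
   \<and> lB S c2 n = rA S n c1"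
proof -
  obtain y1 y2 y3 y4 where Y: "d (0,0,n,0) = (y1,y2,y3,y4)" by (cases "d (0,0,n,0)") auto
  have dE: "d (1,0,n,0) = (y1,y2,y3,y4)" using d_split[of 1 0 n 0] Y dP1 by simp
  have dF: "d (0,0,-n,1) = (-y1,-y2,-y3,-y4)" using d_split[of 0 0 "-n" 1] Y dP2 dminus[of "(0,0,n,0)"]
    by simp
  have dE': "d (0,0,n,1) = (y1,y2,y3,y4)" using d_split[of 0 0 n 1] Y dP2 by simp
  have dF': "d (1,0,-n,0) = (-y1,-y2,-y3,-y4)" using d_split[of 1 0 "-n" 0] Y dP1 dminus[of "(0,0,n,0)"]
    by simp
  have e1: "gm_jordan S (d (1,0,n,0)) (0,0,-n,1) + gm_jordan S (1,0,n,0) (d (0,0,-n,1))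
      + gm_jordan S (gm_mult S (c1,0,0,c2) (1,0,n,0)) (0,0,-n,1) + gm_jordan S (1,0,n,0) (gm_mult S (c1,0,0,c2) (0,0,-n,1)) = 0"
    by (rule cond) (simp_all add: zero_prod_def)
  have e2: "gm_jordan S (d (0,0,n,1)) (1,0,-n,0) + gm_jordan S (0,0,n,1) (d (1,0,-n,0))
      + gm_jordan S (gm_mult S (c1,0,0,c2) (0,0,n,1)) (1,0,-n,0) + gm_jordan S (0,0,n,1) (gm_mult S (c1,0,0,c2) (1,0,-n,0)) = 0"
    by (rule cond) (simp_all add: zero_prod_def)
  from e1 dE dF have f1: "- y1 - pMN S y2 n - y1 = pMN S y2 n \<and>
      - rA S n y1 - lB S y4 n + (- lB S y4 n - rA S n y1) + (lB S c2 n - rA S n c1) = 0 \<and>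
      y4 + (y4 - pNM S n y2) = pNM S n y2" by (simp add: gm_jordan_def zero_prod_def)
  from e2 dE' dF' have f2: "y1 - pMN S y2 n + y1 = pMN S y2 n \<and>
      - lB S y4 n - rA S n y1 + (- rA S n y1 - lB S y4 n) + (rA S n c1 - lB S c2 n) = 0 \<and>
      - pNM S n y2 - y4 - y4 = pNM S n y2" by (simp add: gm_jordan_def zero_prod_def)
  have "(y1 + pMN S y2 n) + (y1 + pMN S y2 n) = - ((- y1 - pMN S y2 n - y1) - pMN S y2 n)" by (simp add: algebra_simps)
  then have a1: "y1 + pMN S y2 n = 0" using f1 tA2[of "y1 + pMN S y2 n"] by simp
  have "(y1 - pMN S y2 n) + (y1 - pMN S y2 n) = (y1 - pMN S y2 n + y1) - pMN S y2 n" by (simp add: algebra_simps)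
  then have a2: "y1 - pMN S y2 n = 0" using f2 tA2[of "y1 - pMN S y2 n"] by simp
  have "y1 + y1 = (y1 + pMN S y2 n) + (y1 - pMN S y2 n)" by (simp add: algebra_simps)
  then have y1: "y1 = 0" using a1 a2 tA2[of "y1"] by simp
  then have p: "pMN S y2 n = 0" using a1 by simp
  have "(y4 - pNM S n y2) + (y4 - pNM S n y2) = (y4 + (y4 - pNM S n y2)) - pNM S n y2" by (simp add: algebra_simps)
  then have b1: "y4 - pNM S n y2 = 0" using f1 tB2[of "y4 - pNM S n y2"] by simp
  have "(y4 + pNM S n y2) + (y4 + pNM S n y2) = - ((- pNM S n y2 - y4 - y4) - pNM S n y2)" by (simp add: algebra_simps)
  then have b2: "y4 + pNM S n y2 = 0" using f2 tB2[of "y4 + pNM S n y2"] by simp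
  have "y4 + y4 = (y4 - pNM S n y2) + (y4 + pNM S n y2)" by (simp add: algebra_simps)
  then have y4: "y4 = 0" using b1 b2 tB2[of "y4"] by simp
  then have q: "pNM S n y2 = 0" using b1 by simp
  have c: "lB S c2 n = rA S n c1" using f1 y1 y4 by simp
  show ?thesis using Y y1 y4 p q c by (simp add: sN_def tN_def)
qed


lemma dM: "d (0,m,0,0) = (0, qM m, rM m, 0)" using R3 by blast
lemma dN: "d (0,0,n,0) = (0, sN n, tN n, 0)" using R4 by blast
lemma rM_m: "pMN S m (rM m) = 0" "pNM S (rM m) m = 0" using R3 by blast+
lemma sN_n: "pNM S n (sN n) = 0" "pMN S (sN n) n = 0" using R4 by blast+
lemma cM: "lA S c1 m = rB S m c2" using R3 by blast
lemma cN: "lB S c2 n = rA S n c1" using R4 by blast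

lemma cA: "c1 * a = a * c1"
proof -
  have "c1 * a - a * c1 = 0"
    by (rule faithA) (simp add: cM)
  then show ?thesis by simp
qed
lemma cB: "c2 * b = b * c2"
proof -
  have "c2 * b - b * c2 = 0"
    by (rule faithB) (simp add: cM[symmetric])
  then show ?thesis by simp
qed

lemma central: "gm_mult S (c1,0,0,c2) U = gm_mult S U (c1,0,0,c2)"
  by (cases U) (simp add: cA cB cM cN)

lemma cond0: "gm_mult S U V = 0 \<Longrightarrow> gm_mult S V U = 0 \<Longrightarrow>
      gm_jordan S (d U) V + gm_jordan S U (d V) = 0"
proof -
  assume uv: "gm_mult S U V = 0" and vu: "gm_mult S V U = 0"
  let ?c = "(c1,0,0,c2) :: ('a,'m,'n,'b) gmat"
  have "gm_jordan S (gm_mult S ?c U) V = 0"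
    unfolding gm_jordan_def
    by (metis mult_assoc central uv vu mult_zeroR add_0)
  moreover have "gm_jordan S U (gm_mult S ?c V) = 0"
    unfolding gm_jordan_def
    by (metis mult_assoc central uv vu mult_zeroR add_0)
  ultimately show ?thesis using cond[OF uv vu] by simp
qed

lemma R6: "qM (lA S a m) = lA S (alpha a) m + lA S a (qM m) \<and> rM (lA S a m) = rA S (rM m) a"
proof -
  have dU: "d (a, lA S a m, 0, 0) = (alpha a, qM (lA S a m), rM (lA S a m), 0)"
    using d_split[of a "lA S a m" 0 0] by (simp add: R1 dM)
  have dV: "d (0, -m, 0, 1) = (0, - qM m, - rM m, 0)"
    using d_split[of 0 "-m" 0 1] dminus[of "(0,m,0,0)"] by (simp add: dM dP2)
  have e: "gm_jordan S (d (a, lA S a m, 0, 0)) (0,-m,0,1) + gm_jordan S (a, lA S a m, 0, 0) (d (0,-m,0,1)) = 0"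
    by (rule cond0) (simp_all add: zero_prod_def)
  from e dU dV have h: "qM (lA S a m) - lA S (alpha a) m = lA S a (qM m) \<and> rM (lA S a m) = rA S (rM m) a"
    by (simp add: gm_jordan_def zero_prod_def)
  then show ?thesis by (simp add: diff_eq_eq add.commute)
qed

lemma R7: "qM (rB S m b) = rB S (qM m) b + rB S m (beta b) \<and> rM (rB S m b) = lB S b (rM m)"
proof -
  have dU: "d (1, m, 0, 0) = (0, qM m, rM m, 0)"
    using d_split[of 1 m 0 0] by (simp add: dP1 dM)
  have dV: "d (0, - rB S m b, 0, b) = (0, - qM (rB S m b), - rM (rB S m b), beta b)"
    using d_split[of 0 "- rB S m b" 0 b] dminus[of "(0,rB S m b,0,0)"] by (simp add: dM R2)
  have e: "gm_jordan S (d (1, m, 0, 0)) (0, - rB S m b, 0, b) + gm_jordan S (1, m, 0, 0) (d (0, - rB S m b, 0, b)) = 0"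
    by (rule cond0) (simp_all add: zero_prod_def)
  from e dU dV have h: "rB S (qM m) b + (rB S m (beta b) - qM (rB S m b)) = 0 \<and> lB S b (rM m) = rM (rB S m b)"
    by (simp add: gm_jordan_def zero_prod_def)
  then show ?thesis by (metis add_diff_eq eq_iff_diff_eq_0)
qed

lemma R8: "sN (rA S n a) = lA S a (sN n) \<and> tN (rA S n a) = rA S n (alpha a) + rA S (tN n) a"
proof -
  have dU: "d (a, 0, rA S n a, 0) = (alpha a, sN (rA S n a), tN (rA S n a), 0)"
    using d_split[of a 0 "rA S n a" 0] by (simp add: R1 dN)
  have dV: "d (0, 0, -n, 1) = (0, - sN n, - tN n, 0)"
    using d_split[of 0 0 "-n" 1] dminus[of "(0,0,n,0)"] by (simp add: dN dP2)
  have e: "gm_jordan S (d (a, 0, rA S n a, 0)) (0,0,-n,1) + gm_jordan S (a, 0, rA S n a, 0) (d (0,0,-n,1)) = 0"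
    by (rule cond0) (simp_all add: zero_prod_def)
  from e dU dV have h: "sN (rA S n a) = lA S a (sN n) \<and> tN (rA S n a) - rA S n (alpha a) = rA S (tN n) a"
    by (simp add: gm_jordan_def zero_prod_def)
  then show ?thesis by (simp add: diff_eq_eq add.commute)
qed

lemma R9: "sN (lB S b n) = rB S (sN n) b \<and> tN (lB S b n) = lB S (beta b) n + lB S b (tN n)"
proof -
  have dU: "d (1, 0, n, 0) = (0, sN n, tN n, 0)"
    using d_split[of 1 0 n 0] by (simp add: dP1 dN)
  have dV: "d (0, 0, - lB S b n, b) = (0, - sN (lB S b n), - tN (lB S b n), beta b)"
    using d_split[of 0 0 "- lB S b n" b] dminus[of "(0,0,lB S b n,0)"] by (simp add: dN R2)
  have e: "gm_jordan S (d (1, 0, n, 0)) (0, 0, - lB S b n, b) + gm_jordan S (1, 0, n, 0) (d (0, 0, - lB S b n, b)) = 0"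
    by (rule cond0) (simp_all add: zero_prod_def)
  from e dU dV have h: "rB S (sN n) b = sN (lB S b n) \<and> lB S b (tN n) + (lB S (beta b) n - tN (lB S b n)) = 0"
    by (simp add: gm_jordan_def zero_prod_def)
  then have "sN (lB S b n) = rB S (sN n) b \<and> tN (lB S b n) = lB S b (tN n) + lB S (beta b) n"
    by (metis add_diff_eq eq_iff_diff_eq_0)
  then show ?thesis by (simp add: add.commute)
qed


lemma add_comp: "alpha (x + y) = alpha x + alpha y" "beta (b + b') = beta b + beta b'"
  "qM (m + m') = qM m + qM m'" "rM (m + m') = rM m + rM m'"
  "sN (n + n') = sN n + sN n'" "tN (n + n') = tN n + tN n'"
proof -
  show "alpha (x + y) = alpha x + alpha y" using dadd[of "(x,0,0,0)" "(y,0,0,0)"] by (simp add: R1)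
  show "beta (b + b') = beta b + beta b'" using dadd[of "(0,0,0,b)" "(0,0,0,b')"] by (simp add: R2)
  show "qM (m + m') = qM m + qM m'" using dadd[of "(0,m,0,0)" "(0,m',0,0)"] by (simp add: dM)
  show "rM (m + m') = rM m + rM m'" using dadd[of "(0,m,0,0)" "(0,m',0,0)"] by (simp add: dM)
  show "sN (n + n') = sN n + sN n'" using dadd[of "(0,0,n,0)" "(0,0,n',0)"] by (simp add: dN)
  show "tN (n + n') = tN n + tN n'" using dadd[of "(0,0,n,0)" "(0,0,n',0)"] by (simp add: dN)
qed

lemma minus_comp: "alpha (- x) = - alpha x" "beta (- b) = - beta b"
  "qM (- m) = - qM m" "rM (- m) = - rM m"
  "sN (- n) = - sN n" "tN (- n) = - tN n"
  using dminus[of "(x,0,0,0)"] dminus[of "(0,0,0,b)"] dminus[of "(0,m,0,0)"] dminus[of "(0,0,n,0)"]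
  by (simp_all add: R1 R2 dM dN)

lemma diff_comp: "alpha (x - y) = alpha x - alpha y" "beta (b - b') = beta b - beta b'"
  "qM (m - m') = qM m - qM m'" "rM (m - m') = rM m - rM m'"
  "sN (n - n') = sN n - sN n'" "tN (n - n') = tN n - tN n'"
  by (simp_all only: diff_conv_add_uminus add_comp minus_comp)

lemma alpha1[simp]: "alpha 1 = 0" using R1[of 1] dP1 by (simp add: zero_prod_def)
lemma beta1[simp]: "beta 1 = 0" using R2[of 1] dP2 by (simp add: zero_prod_def)

lemma alpha_mult: "alpha (a * a') = alpha a * a' + a * alpha a'"
proof -
  have "alpha (a * a') - (alpha a * a' + a * alpha a') = 0"
  proof (rule faithA)
    fix m
    have e1: "qM (lA S a (lA S a' m)) = lA S (alpha (a*a')) m + lA S a (lA S a' (qM m))"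
      using R6[of "a*a'" m] by simp
    have e2: "qM (lA S a (lA S a' m)) = lA S (alpha a) (lA S a' m) + lA S a (lA S (alpha a') m + lA S a' (qM m))"
      using R6[of a "lA S a' m"] R6[of a' m] by simp
    show "lA S (alpha (a * a') - (alpha a * a' + a * alpha a')) m = 0"
      using e1 e2 by (simp add: algebra_simps)
  qed
  then show ?thesis by simp
qed

lemma beta_mult: "beta (b * b') = beta b * b' + b * beta b'"
proof -
  have "beta (b * b') - (beta b * b' + b * beta b') = 0"
  proof (rule faithB)
    fix m
    have e1: "qM (rB S (rB S m b) b') = rB S (rB S (qM m) b) b' + rB S m (beta (b*b'))"
      using R7[of m "b*b'"] by simp
    have e2: "qM (rB S (rB S m b) b') = rB S (rB S (qM m) b + rB S m (beta b)) b' + rB S (rB S m b) (beta b')"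
      using R7[of "rB S m b" b'] R7[of m b] by simp
    show "rB S m (beta (b * b') - (beta b * b' + b * beta b')) = 0"
      using e1 e2 by (simp add: algebra_simps)
  qed
  then show ?thesis by simp
qed

lemma R12a: "(1 + pMN S m n) * (pMN S (qM m) n + pMN S m (tN n) - alpha (pMN S m n)) = 0"
proof -
  let ?E = "(1 + pMN S m n, - m - rB S m (pNM S n m), n, - pNM S n m) :: ('a,'m,'n,'b) gmat"
  let ?F = "(- pMN S m n, m + rB S m (pNM S n m), - n, 1 + pNM S n m) :: ('a,'m,'n,'b) gmat"
  let ?D = "pMN S (qM m) n + pMN S m (tN n) - alpha (pMN S m n)"
  have EF: "gm_mult S ?E ?F = 0" by (simp add: zero_prod_def algebra_simps)
  have FE: "gm_mult S ?F ?E = 0" by (simp add: zero_prod_def algebra_simps)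
  have qx: "qM (rB S m (pNM S n m)) = lA S (alpha (pMN S m n)) m + rB S m (pNM S n (qM m))"
    using R6[of "pMN S m n" m] by simp
  have rx: "rM (rB S m (pNM S n m)) = rA S (rM m) (pMN S m n)"
    using R6[of "pMN S m n" m] by simp
  have dE: "d ?E = (alpha (pMN S m n), - qM m - (lA S (alpha (pMN S m n)) m + rB S m (pNM S n (qM m))) + sN n,
        - rM m - rA S (rM m) (pMN S m n) + tN n, - beta (pNM S n m))"
    using d_split[of "1 + pMN S m n" "- m - rB S m (pNM S n m)" n "- pNM S n m"]
    by (simp add: R1 R2 dM dN add_comp minus_comp diff_comp qx rx)
  have I0: "d (1,0,0,1) = 0" using d_split[of 1 0 0 1] dP1 dP2 by simp
  have Feq: "?F = (1,0,0,1) - ?E" by simp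
  have dF: "d ?F = - d ?E" by (subst Feq) (simp only: ddiff I0 diff_0)
  have e: "gm_jordan S (d ?E) ?F + gm_jordan S ?E (d ?F) = 0" by (rule cond0[OF EF FE])
  have A: "fst (gm_jordan S (d ?E) ?F + gm_jordan S ?E (d ?F)) = 0" using e by simp
  have "fst (gm_jordan S (d ?E) ?F + gm_jordan S ?E (d ?F)) = (1 + pMN S m n) * ?D + (1 + pMN S m n) * ?D"
    using dE dF by (simp add: gm_jordan_def algebra_simps rM_m sN_n)
  then show ?thesis using A tA2[of "(1 + pMN S m n) * ?D"] by simp
qed

lemma R12: "alpha (pMN S m n) = pMN S (qM m) n + pMN S m (tN n)"
proof -
  let ?D = "pMN S (qM m) n + pMN S m (tN n) - alpha (pMN S m n)"
  have h1: "(1 + pMN S m n) * ?D = 0" by (rule R12a)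
  have eq1: "1 + pMN S (-m) n = 1 - pMN S m n" by simp
  have eq2: "pMN S (qM (-m)) n + pMN S (-m) (tN n) - alpha (pMN S (-m) n) = - ?D"
    by (simp add: minus_comp)
  have h2: "(1 - pMN S m n) * (- ?D) = 0" using R12a[of "-m" n] unfolding eq1 eq2 .
  have "?D + ?D = (1 + pMN S m n) * ?D - (1 - pMN S m n) * (- ?D)" by (simp add: algebra_simps)
  then have "?D = 0" using h1 h2 tA2[of ?D] by simp
  then show ?thesis by simp
qed

lemma R13: "beta (pNM S n m) = pNM S n (qM m) + pNM S (tN n) m"
proof -
  have "beta (pNM S n m) - (pNM S n (qM m) + pNM S (tN n) m) = 0"
  proof (rule faithB)
    fix m'
    have e1: "qM (rB S m' (pNM S n m)) = rB S (qM m') (pNM S n m) + rB S m' (beta (pNM S n m))"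
      using R7[of m' "pNM S n m"] by simp
    have e2: "qM (rB S m' (pNM S n m)) = lA S (alpha (pMN S m' n)) m + rB S m' (pNM S n (qM m))"
      using R6[of "pMN S m' n" m] by simp
    show "rB S m' (beta (pNM S n m) - (pNM S n (qM m) + pNM S (tN n) m)) = 0"
      using e1 e2 by (simp add: R12 algebra_simps)
  qed
  then show ?thesis by simp
qed

lemma jordan: "d (gm_mult S U U) = gm_mult S (d U) U + gm_mult S U (d U)"
proof -
  obtain a m n b where U: "U = (a,m,n,b)" by (cases U) auto
  have dU: "d U = (alpha a, qM m + sN n, rM m + tN n, beta b)"
    unfolding U using d_split[of a m n b] by (simp add: R1 R2 dM dN)
  have "d (gm_mult S U U) = (alpha (a*a + pMN S m n),
      qM (lA S a m + rB S m b) + sN (lB S b n + rA S n a),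
      rM (lA S a m + rB S m b) + tN (lB S b n + rA S n a), beta (pNM S n m + b * b))"
    unfolding U using d_split[of "a*a + pMN S m n" "lA S a m + rB S m b" "lB S b n + rA S n a" "pNM S n m + b * b"]
    by (simp add: R1 R2 dM dN)
  then show ?thesis using dU unfolding U
    by (simp add: add_comp R6 R7 R8 R9 R12 R13 alpha_mult beta_mult rM_m sN_n algebra_simps)
qed

end



theorem lemma2p7:
  fixes S :: "('a::ring_1, 'm::ab_group_add, 'n::ab_group_add, 'b::ring_1) gmr"
    and \<phi> :: "('a, 'm, 'n, 'b) gmat \<Rightarrow> ('a, 'm, 'n, 'b) gmat"
  assumes "gen_matrix_ring S"
    and "two_torsion_free TYPE('a)" and "two_torsion_free TYPE('b)"
    and "\<And>U V. \<phi> (U + V) = \<phi> U + \<phi> V"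
    and "\<And>U V. gm_mult S U V = 0 \<Longrightarrow> gm_mult S V U = 0 \<Longrightarrow>
           gm_jordan S (\<phi> U) V + gm_jordan S U (\<phi> V) = 0"
  shows "(\<forall>U V. gm_varphi S \<phi> (U + V) = gm_varphi S \<phi> U + gm_varphi S \<phi> V) \<and>
         (\<forall>U. gm_varphi S \<phi> (gm_mult S U U) =
               gm_mult S (gm_varphi S \<phi> U) U + gm_mult S U (gm_varphi S \<phi> U))"
proof -
  interpret GM S by unfold_locales (rule assms(1))
  note add = assms(4) and zp = assms(5)
  have phi0: "\<phi> 0 = 0" using add[of 0 0] by simp
  have phim: "\<phi> (- X) = - \<phi> X" for X
  proof -
    have "\<phi> X + \<phi> (- X) = 0" using add[of X "-X"] phi0 by simp
    then show ?thesis by (rule minus_unique[symmetric])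
  qed
  have phid: "\<phi> (X - Y) = \<phi> X - \<phi> Y" for X Y
    by (simp only: diff_conv_add_uminus add phim)
  obtain c1 c12 c21 c2 where C: "\<phi> gm_one = (c1,c12,c21,c2)" by (cases "\<phi> gm_one") auto
  obtain x1 x2 x3 x4 where X: "\<phi> gm_P1 = (x1,x2,x3,x4)" by (cases "\<phi> gm_P1") auto
  have P2eq: "(gm_P2 :: ('a,'m,'n,'b) gmat) = gm_one - gm_P1" by (simp add: gm_P2_def gm_one_def gm_P1_def)
  have P2: "\<phi> gm_P2 = (c1 - x1, c12 - x2, c21 - x3, c2 - x4)" by (simp only: P2eq phid C X) simp
  have e: "gm_jordan S (\<phi> gm_P1) gm_P2 + gm_jordan S gm_P1 (\<phi> gm_P2) = 0"
    by (rule zp) (simp_all add: gm_P1_def gm_P2_def zero_prod_def)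
  from e[unfolded X P2] have h: "c1 - x1 + (c1 - x1) = 0 \<and> c12 = 0 \<and> c21 = 0 \<and> x4 + x4 = 0"
    by (simp add: gm_jordan_def gm_P1_def gm_P2_def zero_prod_def)
  have tA: "\<And>x::'a. x + x = 0 \<Longrightarrow> x = 0" using assms(2) unfolding two_torsion_free_def by blast
  have tB: "\<And>x::'b. x + x = 0 \<Longrightarrow> x = 0" using assms(3) unfolding two_torsion_free_def by blast
  have x1: "x1 = c1" using tA[of "c1 - x1"] h by simp
  have x4: "x4 = 0" using tB[of x4] h by simp
  have C': "\<phi> gm_one = (c1,0,0,c2)" using C h by simp
  have X': "\<phi> (1,0,0,0) = (c1,x2,x3,0)" using X x1 x4 by (simp add: gm_P1_def)
  have P2': "\<phi> (0,0,0,1) = (0,- x2,- x3,c2)" using P2 x1 x4 h by (simp add: gm_P2_def)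
  have T: "gm_T S \<phi> = (0, x2, - x3, 0)"
    unfolding gm_T_def gm_P1_def gm_P2_def using X' P2' by simp
  define v where "v = gm_varphi S \<phi>"
  have vU: "v U = \<phi> U - gm_mult S (c1,0,0,c2) U + gm_comm S (0, x2, - x3, 0) U" for U
    unfolding v_def gm_varphi_def C' T ..
  have vadd: "v (U + V) = v U + v V" for U V
    unfolding vU gm_comm_def by (simp add: add mult_addL mult_addR algebra_simps)
  have inner: "gm_jordan S (gm_comm S T' U) V + gm_jordan S U (gm_comm S T' V) = 0"
    if uv: "gm_mult S U V = 0" and vu: "gm_mult S V U = 0" for T' U V
  proof -
    have z1: "gm_mult S V (gm_mult S U T') = 0" by (metis mult_assoc vu mult_zeroL)
    have z2: "gm_mult S U (gm_mult S V T') = 0" by (metis mult_assoc uv mult_zeroL)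
    show ?thesis unfolding gm_jordan_def gm_comm_def
      by (simp add: mult_diffL mult_diffR mult_assoc uv vu z1 z2)
  qed
  interpret J: JD S v c1 c2
  proof unfold_locales
    show "\<And>x::'a. x + x = 0 \<Longrightarrow> x = 0" by (rule tA)
    show "\<And>x::'b. x + x = 0 \<Longrightarrow> x = 0" by (rule tB)
    show "\<And>U V. v (U + V) = v U + v V" by (rule vadd)
    show "v (1,0,0,0) = 0" unfolding vU gm_comm_def X' by (simp add: zero_prod_def)
    show "v (0,0,0,1) = 0" unfolding vU gm_comm_def P2' by (simp add: zero_prod_def)
  next
    fix U V assume uv: "gm_mult S U V = 0" and vu: "gm_mult S V U = 0"
    let ?T = "(0, x2, - x3, 0) :: ('a,'m,'n,'b) gmat"
    have "gm_jordan S (v U) V + gm_jordan S U (v V) + gm_jordan S (gm_mult S (c1,0,0,c2) U) V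
       + gm_jordan S U (gm_mult S (c1,0,0,c2) V)
       = (gm_jordan S (\<phi> U) V + gm_jordan S U (\<phi> V))
         + (gm_jordan S (gm_comm S ?T U) V + gm_jordan S U (gm_comm S ?T V))"
      unfolding vU gm_jordan_def by (simp add: mult_addL mult_addR mult_diffL mult_diffR algebra_simps)
    also have "\<dots> = 0" using zp[OF uv vu] inner[OF uv vu] by simp
    finally show "gm_jordan S (v U) V + gm_jordan S U (v V) + gm_jordan S (gm_mult S (c1,0,0,c2) U) V
       + gm_jordan S U (gm_mult S (c1,0,0,c2) V) = 0" .
  qed
  show ?thesis using vadd J.jordan unfolding v_def by blast
qed

end
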